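(* Let $\mathcal{K}^{\langle\infty\rangle}$ be an unbounded simple nested fractal. For every $M\in\mathbb{Z}$ there exist positive constants $C_6(M),C_7(M)$ such that for all $x,y\in\mathcal{K}^{\langle\infty\rangle}$, $$C_6(M)\,|x-y|\le d_M(x,y)\le\max\{2,\ C_7(M)\,|x-y|^{d_f}\},$$ where $d_f=\log N/\log L$.
   Context: Setting: $L>1$, $N\ge2$, $\nu_1=0,\dots,\nu_N\in\mathbb{R}^2$, $\Psi_i(x)=x/L+\nu_i$, and $\mathcal{K}^{\langle 0\rangle}=\bigcup_i\Psi_i(\mathcal{K}^{\langle 0\rangle})$ is a planar simple nested fractal (with $V_0^{\langle0\rangle}$ its set of essential fixed points, $k=\#V_0^{\langle0\rangle}\ge3$). $\mathcal{K}^{\langle M\rangle}=L^M\mathcal{K}^{\langle 0\rangle}$, $\mathcal{K}^{\langle\infty\rangle}=\bigcup_{M\ge0}\mathcal{K}^{\langle M\rangle}$. An $M$-complex is $\mathcal{K}^{\langle M\rangle}+\sum_{j=M+1}^{J}L^j\nu_{i_j}$ ($J\ge M+1$, $i_j\in\{1,\dots,N\}$); $\mathcal{T}_M$ is the set of all $M$-complexes. The $M$-graph distance: $d_M(x,y)=0$ if $x=y$; $d_M(x,y)=1$ if $x\ne y$ and some $\Delta_M\in\mathcal{T}_M$ contains both; otherwise $d_M(x,y)$ is the smallest $n>1$ for which there exist $\Delta_M^{(1)},\dots,\Delta_M^{(n)}\in\mathcal{T}_M$ with $x\in\Delta_M^{(1)}$, $y\in\Delta_M^{(n)}$ and $\Delta_M^{(i)}\cap\Delta_M^{(i+1)}\ne\emptyset$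 for $1\le i\le n-1$. $|\cdot|$ is the Euclidean norm. *)

theory Defs
  imports "HOL-Analysis.Analysis"
begin

type_synonym pt = "real ^ 2"

definition Psi :: "real \<Rightarrow> (nat \<Rightarrow> pt) \<Rightarrow> nat \<Rightarrow> pt \<Rightarrow> pt" where
  "Psi L \<nu> i x = (1 / L) *\<^sub>R x + \<nu> i"

definition Psi_word :: "real \<Rightarrow> (nat \<Rightarrow> pt) \<Rightarrow> nat list \<Rightarrow> pt \<Rightarrow> pt" where
  "Psi_word L \<nu> w = foldr (\<lambda>i f. Psi L \<nu> i \<circ> f) w id"

definition words :: "nat \<Rightarrow> nat \<Rightarrow> nat list set" where
  "words N n = {w. length w = n \<and> set w \<subseteq> {1..N}}"

definition fixed_pts :: "real \<Rightarrow> nat \<Rightarrow> (nat \<Rightarrow> pt) \<Rightarrow> pt set" where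
  "fixed_pts L N \<nu> = {x. \<exists>i\<in>{1..N}. Psi L \<nu> i x = x}"

definition ess_fixed_pts :: "real \<Rightarrow> nat \<Rightarrow> (nat \<Rightarrow> pt) \<Rightarrow> pt set" where
  "ess_fixed_pts L N \<nu> = {x \<in> fixed_pts L N \<nu>. \<exists>y \<in> fixed_pts L N \<nu>. y \<noteq> x \<and>
      (\<exists>i\<in>{1..N}. \<exists>j\<in>{1..N}. i \<noteq> j \<and> Psi L \<nu> i x = Psi L \<nu> j y)}"

text \<open>Reflection in the perpendicular bisector of the segment [x,y].\<close>
definition refl_bis :: "pt \<Rightarrow> pt \<Rightarrow> pt \<Rightarrow> pt" where
  "refl_bis x y z = z - (2 * ((z - (1/2) *\<^sub>R (x + y)) \<bullet> (y - x)) / (norm (y - x))\<^sup>2) *\<^sub>R (y - x)"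

definition simple_nested_fractal :: "real \<Rightarrow> nat \<Rightarrow> (nat \<Rightarrow> pt) \<Rightarrow> pt set \<Rightarrow> bool" where
  "simple_nested_fractal L N \<nu> K \<longleftrightarrow>
     L > 1 \<and> N \<ge> 2 \<and> \<nu> 1 = 0 \<and>
     compact K \<and> K \<noteq> {} \<and> K = (\<Union>i\<in>{1..N}. Psi L \<nu> i ` K) \<and>
     card (ess_fixed_pts L N \<nu>) \<ge> 3 \<and>
     \<comment> \<open>open set condition\<close>
     (\<exists>U. open U \<and> bounded U \<and> U \<noteq> {} \<and> (\<forall>i\<in>{1..N}. Psi L \<nu> i ` U \<subseteq> U) \<and>
          (\<forall>i\<in>{1..N}. \<forall>j\<in>{1..N}. i \<noteq> j \<longrightarrow> Psi L \<nu> i ` U \<inter> Psi L \<nu> j ` U = {})) \<and>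
     \<comment> \<open>connectivity: any two 1-cells are joined by a chain of intersecting 1-cells\<close>
     (\<forall>a\<in>{1..N}. \<forall>b\<in>{1..N}. \<exists>n c. c 0 = a \<and> c n = b \<and> (\<forall>l\<le>n. c l \<in> {1..N}) \<and>
          (\<forall>l<n. Psi L \<nu> (c l) ` K \<inter> Psi L \<nu> (c (Suc l)) ` K \<noteq> {})) \<and>
     \<comment> \<open>symmetry\<close>
     (\<forall>x\<in>ess_fixed_pts L N \<nu>. \<forall>y\<in>ess_fixed_pts L N \<nu>. x \<noteq> y \<longrightarrow> (\<forall>n.
          refl_bis x y ` (\<Union>w\<in>words N n. Psi_word L \<nu> w ` ess_fixed_pts L N \<nu>)
            \<subseteq> (\<Union>w\<in>words N n. Psi_word L \<nu> w ` ess_fixed_pts L N \<nu>))) \<and>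
     \<comment> \<open>nesting\<close>
     (\<forall>n\<ge>1. \<forall>w\<in>words N n. \<forall>w'\<in>words N n. w \<noteq> w' \<longrightarrow>
          Psi_word L \<nu> w ` K \<inter> Psi_word L \<nu> w' ` K =
          Psi_word L \<nu> w ` ess_fixed_pts L N \<nu> \<inter> Psi_word L \<nu> w' ` ess_fixed_pts L N \<nu>)"

definition Kscaled :: "real \<Rightarrow> pt set \<Rightarrow> int \<Rightarrow> pt set" where
  "Kscaled L K M = (\<lambda>x. (L powr real_of_int M) *\<^sub>R x) ` K"

definition Kinf :: "real \<Rightarrow> pt set \<Rightarrow> pt set" where
  "Kinf L K = (\<Union>M::nat. Kscaled L K (int M))"

definition complexes :: "real \<Rightarrow> nat \<Rightarrow> (nat \<Rightarrow> pt) \<Rightarrow> pt set \<Rightarrow> int \<Rightarrow> pt set set" where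
  "complexes L N \<nu> K M = {(\<lambda>x. x + (\<Sum>j\<in>{M+1..J}. (L powr real_of_int j) *\<^sub>R \<nu> (i j))) ` Kscaled L K M
       | J i. J \<ge> M + 1 \<and> (\<forall>j\<in>{M+1..J}. i j \<in> {1..N})}"

definition complex_chain :: "real \<Rightarrow> nat \<Rightarrow> (nat \<Rightarrow> pt) \<Rightarrow> pt set \<Rightarrow> int \<Rightarrow> nat \<Rightarrow> pt \<Rightarrow> pt \<Rightarrow> bool" where
  "complex_chain L N \<nu> K M n x y \<longleftrightarrow> (\<exists>D :: nat \<Rightarrow> pt set.
      (\<forall>l\<in>{1..n}. D l \<in> complexes L N \<nu> K M) \<and> x \<in> D 1 \<and> y \<in> D n \<and>
      (\<forall>l\<in>{1..<n}. D l \<inter> D (Suc l) \<noteq> {}))"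

definition dM :: "real \<Rightarrow> nat \<Rightarrow> (nat \<Rightarrow> pt) \<Rightarrow> pt set \<Rightarrow> int \<Rightarrow> pt \<Rightarrow> pt \<Rightarrow> nat" where
  "dM L N \<nu> K M x y =
     (if x = y then 0
      else if (\<exists>D\<in>complexes L N \<nu> K M. x \<in> D \<and> y \<in> D) then 1
      else (LEAST n. n > 1 \<and> complex_chain L N \<nu> K M n x y))"

end

theory Submission
  imports Defs
begin
lemma finite_min_helper:
  assumes "finite I" "\<forall>i\<in>I. \<exists>d>0. P i d"
    and mono: "\<And>i d d'. P i d \<Longrightarrow> 0 < d' \<Longrightarrow> d' \<le> d \<Longrightarrow> P i d'"
  shows "\<exists>d>(0::real). \<forall>i\<in>I. P i d"
  using assms(1,2)
proof (induction I rule: finite_induct)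
  case empty then show ?case by (intro exI[of _ 1]) auto
next
  case (insert a F)
  then obtain d1 where d1: "d1 > 0" "\<forall>i\<in>F. P i d1" by auto
  from insert obtain d2 where d2: "d2 > 0" "P a d2" by auto
  show ?case
    apply (rule exI[of _ "min d1 d2"])
    using d1 d2 mono by auto
qed

definition gchain :: "('w \<Rightarrow> 'a set) \<Rightarrow> 'w set \<Rightarrow> 'a \<Rightarrow> 'a \<Rightarrow> 'w list \<Rightarrow> bool" where
  "gchain f S x y ws \<longleftrightarrow> ws \<noteq> [] \<and> set ws \<subseteq> S \<and> x \<in> f (hd ws) \<and> y \<in> f (last ws) \<and>
     successively (\<lambda>u v. f u \<inter> f v \<noteq> {}) ws"

lemma gchain_append:
  assumes "gchain f S x z A" "gchain f S z y B"
  shows "gchain f S x y (A @ B)"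
  using assms unfolding gchain_def
  by (auto simp: successively_append_iff)

lemma gchain_map:
  assumes "gchain f S x y ws" "\<And>u. u \<in> S \<Longrightarrow> g u \<in> S' \<and> f' (g u) = h ` f u"
  shows "gchain f' S' (h x) (h y) (map g ws)"
proof -
  have s: "successively (\<lambda>u v. f u \<inter> f v \<noteq> {}) ws" and sub: "set ws \<subseteq> S"
    using assms(1) unfolding gchain_def by auto
  have "successively (\<lambda>u v. f' (g u) \<inter> f' (g v) \<noteq> {}) ws"
  proof -
    have "successively (\<lambda>u v. u \<in> S \<and> v \<in> S \<and> f u \<inter> f v \<noteq> {}) ws"
      using s sub unfolding successively_conv_nth
      by (metis Suc_lessD nth_mem subsetD)
    then show ?thesis
      by (rule successively_mono) (use assms(2) in blast)
  qed
  moreover have "hd ws \<in> S" "last ws \<in> S" using assms(1) unfolding gchain_def by auto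
  ultimately show ?thesis using assms unfolding gchain_def
    by (auto simp: successively_map hd_map last_map)
qed

lemma gchain_short:
  assumes "finite S" "gchain f S x y ws"
  shows "\<exists>ws'. gchain f S x y ws' \<and> length ws' \<le> card S"
proof -
  define P where "P n \<longleftrightarrow> (\<exists>ws. gchain f S x y ws \<and> length ws = n)" for n
  have "P (length ws)" using assms unfolding P_def by auto
  then obtain n where n: "P n" and min: "\<And>m. P m \<Longrightarrow> n \<le> m"
    by (metis exists_least_iff not_le)
  then obtain ws0 where ws0: "gchain f S x y ws0" "length ws0 = n" unfolding P_def by auto
  have "distinct ws0"
  proof (rule ccontr)
    assume "\<not> distinct ws0"
    then obtain as bs cs u where eq: "ws0 = as @ [u] @ bs @ [u] @ cs"
      using not_distinct_decomp by blast
    let ?Q = "\<lambda>u v. f u \<inter> f v \<noteq> {}"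
    have s0: "successively ?Q (as @ (u # bs) @ (u # cs))" using ws0(1) unfolding eq gchain_def by simp
    then have s1': "successively ?Q ((u # bs) @ (u # cs))" "successively ?Q as"
      and s2: "as = [] \<or> ?Q (last as) u"
      unfolding successively_append_iff[of ?Q as] by auto
    have s1: "successively ?Q (u # cs)"
      using s1'(1) unfolding successively_append_iff[of ?Q "u#bs"] by blast
    have "successively ?Q (as @ (u # cs))"
      using s1 s1'(2) s2 unfolding successively_append_iff[of ?Q as] by auto
    moreover have "x \<in> f (hd (as @ [u] @ cs))" using ws0(1) unfolding eq gchain_def
      by (cases as) auto
    moreover have "y \<in> f (last (as @ [u] @ cs))" using ws0(1) unfolding eq gchain_def
      by (cases cs rule: rev_cases) auto
    ultimately have "gchain f S x y (as @ [u] @ cs)"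
      using ws0(1) unfolding eq gchain_def by auto
    then have "P (length (as @ [u] @ cs))" unfolding P_def by blast
    then show False using min ws0(2) eq by fastforce
  qed
  then have "length ws0 \<le> card S"
    using ws0(1) assms(1) unfolding gchain_def
    by (metis card_mono distinct_card)
  then show ?thesis using ws0 by blast
qed

locale snf =
  fixes L :: real and N :: nat and \<nu> :: "nat \<Rightarrow> real ^ 2" and K :: "(real ^ 2) set"
  assumes snf: "simple_nested_fractal L N \<nu> K"
begin

abbreviation "psi \<equiv> Psi L \<nu>"
abbreviation "W \<equiv> Psi_word L \<nu>"
abbreviation "V0 \<equiv> ess_fixed_pts L N \<nu>"

lemmas snf_all = snf[unfolded simple_nested_fractal_def]
lemmas snf_c = snf_all[THEN conjunct2] snf_all[THEN conjunct2, THEN conjunct2]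
  snf_all[THEN conjunct2, THEN conjunct2, THEN conjunct2]
  snf_all[THEN conjunct2, THEN conjunct2, THEN conjunct2, THEN conjunct2]
  snf_all[THEN conjunct2, THEN conjunct2, THEN conjunct2, THEN conjunct2, THEN conjunct2]
  snf_all[THEN conjunct2, THEN conjunct2, THEN conjunct2, THEN conjunct2, THEN conjunct2, THEN conjunct2]
  snf_all[THEN conjunct2, THEN conjunct2, THEN conjunct2, THEN conjunct2, THEN conjunct2, THEN conjunct2, THEN conjunct2]
  snf_all[THEN conjunct2, THEN conjunct2, THEN conjunct2, THEN conjunct2, THEN conjunct2, THEN conjunct2, THEN conjunct2, THEN conjunct2]
  snf_all[THEN conjunct2, THEN conjunct2, THEN conjunct2, THEN conjunct2, THEN conjunct2, THEN conjunct2, THEN conjunct2, THEN conjunct2, THEN conjunct2]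
  snf_all[THEN conjunct2, THEN conjunct2, THEN conjunct2, THEN conjunct2, THEN conjunct2, THEN conjunct2, THEN conjunct2, THEN conjunct2, THEN conjunct2, THEN conjunct2]

lemma L_gt1: "L > 1" using snf_all[THEN conjunct1] .
lemma N_ge2: "N \<ge> 2" using snf_c(1)[THEN conjunct1] .
lemma nu1: "\<nu> 1 = 0" using snf_c(2)[THEN conjunct1] .
lemma compK: "compact K" using snf_c(3)[THEN conjunct1] .
lemma Kne: "K \<noteq> {}" using snf_c(4)[THEN conjunct1] .
lemma Kself: "K = (\<Union>i\<in>{1..N}. psi i ` K)" using snf_c(5)[THEN conjunct1] .
lemma cardV0: "card V0 \<ge> 3" using snf_c(6)[THEN conjunct1] .
lemma conn0: "\<forall>a\<in>{1..N}. \<forall>b\<in>{1..N}. \<exists>n c. c 0 = a \<and> c n = b \<and> (\<forall>l\<le>n. c l \<in> {1..N}) \<and>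
          (\<forall>l<n. psi (c l) ` K \<inter> psi (c (Suc l)) ` K \<noteq> {})" using snf_c(8)[THEN conjunct1] .
lemma nest0: "\<forall>n\<ge>1. \<forall>w\<in>words N n. \<forall>w'\<in>words N n. w \<noteq> w' \<longrightarrow>
          W w ` K \<inter> W w' ` K = W w ` V0 \<inter> W w' ` V0" using snf_c(10) .

lemma nest: "n \<ge> 1 \<Longrightarrow> w \<in> words N n \<Longrightarrow> w' \<in> words N n \<Longrightarrow> w \<noteq> w' \<Longrightarrow>
   W w ` K \<inter> W w' ` K = W w ` V0 \<inter> W w' ` V0"
  using nest0 by blast

lemma conn: "a \<in> {1..N} \<Longrightarrow> b \<in> {1..N} \<Longrightarrow> \<exists>n c. c 0 = a \<and> c n = b \<and> (\<forall>l\<le>n. c l \<in> {1..N}) \<and>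
          (\<forall>l<n. psi (c l) ` K \<inter> psi (c (Suc l)) ` K \<noteq> {})"
  using conn0 by blast

lemma finV0: "finite V0" using cardV0 by (metis card.infinite not_numeral_le_zero)

lemma Lpos: "L > 0" using L_gt1 by simp

lemma W_Nil[simp]: "W [] = id" by (simp add: Psi_word_def)
lemma W_Cons[simp]: "W (a # w) = psi a \<circ> W w" by (simp add: Psi_word_def)
lemma W_append: "W (u @ v) = W u \<circ> W v" by (induction u) auto

lemma psi_apply: "psi i p = (1/L) *\<^sub>R p + \<nu> i" by (simp add: Psi_def)

lemma psi_dist: "dist (psi i a) (psi i b) = (1/L) * dist a b"
proof -
  have "dist (psi i a) (psi i b) = norm ((1/L) *\<^sub>R (a - b))"
    by (simp add: psi_apply dist_norm algebra_simps)
  then show ?thesis using Lpos by (simp add: dist_norm)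
qed

lemma W_dist: "dist (W w a) (W w b) = (1/L)^length w * dist a b"
  by (induction w) (auto simp: psi_dist)

lemma psi_inj: "psi i a = psi i b \<longleftrightarrow> a = b"
  using Lpos by (auto simp: psi_apply)

lemma W_inj: "W w a = W w b \<longleftrightarrow> a = b"
  by (induction w) (auto simp: psi_inj)

lemma psi_sub: "i \<in> {1..N} \<Longrightarrow> psi i ` K \<subseteq> K"
  using Kself by blast

lemma W_sub: "set w \<subseteq> {1..N} \<Longrightarrow> W w ` K \<subseteq> K"
proof (induction w)
  case Nil then show ?case by simp
next
  case (Cons a w)
  then have "W w ` K \<subseteq> K" by simp
  then have "psi a ` W w ` K \<subseteq> psi a ` K" by blast
  also have "\<dots> \<subseteq> K" using Cons.prems psi_sub by simp
  finally show ?case by (simp add: image_comp)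
qed

lemma words_Suc: "t \<in> words N (Suc k) \<longleftrightarrow> (\<exists>\<tau> t2. t = \<tau> # t2 \<and> \<tau> \<in> {1..N} \<and> t2 \<in> words N k)"
  unfolding words_def by (cases t) auto

lemma words_0: "words N 0 = {[]}" unfolding words_def by auto

lemma words_sub: "w \<in> words N n \<Longrightarrow> W w ` K \<subseteq> K" unfolding words_def using W_sub by auto

lemma cover: "x \<in> K \<Longrightarrow> \<exists>w\<in>words N n. x \<in> W w ` K"
proof (induction n arbitrary: x)
  case 0 then show ?case by (auto simp: words_0)
next
  case (Suc n)
  then obtain a x' where a: "a \<in> {1..N}" "x' \<in> K" "x = psi a x'" using Kself by blast
  then obtain w where "w \<in> words N n" "x' \<in> W w ` K" using Suc.IH by blast
  then show ?case using a by (auto simp: words_Suc intro!: bexI[of _ "a # w"])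
qed

lemma psi_K_pow: "p \<in> K \<Longrightarrow> (1/L)^k *\<^sub>R p \<in> K"
proof (induction k)
  case 0 then show ?case by simp
next
  case (Suc k)
  have "psi 1 ((1/L)^k *\<^sub>R p) \<in> K" using psi_sub[of 1] Suc N_ge2 by auto
  moreover have "\<nu> (Suc 0) = 0" using nu1 by simp
  ultimately show ?case by (simp add: psi_apply)
qed

lemma fixed_in_K:
  assumes "i \<in> {1..N}" "psi i a = a" shows "a \<in> K"
proof -
  obtain p where p: "p \<in> K" using Kne by blast
  have "a \<in> closure K"
  proof (subst closure_approachable, intro allI impI)
    fix e :: real assume e: "e > 0"
    have e1: "0 < e / (dist p a + 1)" using e by (intro divide_pos_pos) (auto intro: add_nonneg_pos)
    have l1: "1/L < 1" using L_gt1 by simp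
    obtain n where n: "(1/L)^n < e / (dist p a + 1)"
      using real_arch_pow_inv[OF e1 l1] by blast
    have fx: "W (replicate n i) a = a" using assms(2) by (induction n) auto
    have "set (replicate n i) \<subseteq> {1..N}" using assms(1) by auto
    then have inK: "W (replicate n i) p \<in> K" using W_sub[of "replicate n i"] p by blast
    have "dist (W (replicate n i) p) a = (1/L)^n * dist p a"
      using W_dist[of "replicate n i" p a] fx by simp
    also have "\<dots> \<le> (1/L)^n * (dist p a + 1)" using Lpos by simp
    also have "\<dots> < e" using n pos_less_divide_eq[of "dist p a + 1" "(1/L)^n" e]
      by (smt (verit) zero_le_dist)
    finally show "\<exists>y\<in>K. dist y a < e" using inK by blast
  qed
  then show ?thesis using compK by (simp add: compact_imp_closed closure_closed)
qed

end

context snf begin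

lemma V0_fixed: "a \<in> V0 \<Longrightarrow> \<exists>i\<in>{1..N}. psi i a = a"
  unfolding ess_fixed_pts_def fixed_pts_def by auto

lemma V0_K: "a \<in> V0 \<Longrightarrow> a \<in> K"
  using V0_fixed fixed_in_K by blast

lemma V1:
  assumes "a \<in> V0" "\<tau> \<in> {1..N}" "a \<in> psi \<tau> ` K"
  shows "\<exists>a'\<in>V0. a = psi \<tau> a'"
proof -
  obtain r where r: "r \<in> {1..N}" "psi r a = a" using V0_fixed assms(1) by blast
  show ?thesis
  proof (cases "r = \<tau>")
    case True then show ?thesis using r assms(1) by metis
  next
    case False
    have w: "[\<tau>] \<in> words N 1" "[r] \<in> words N 1" using r assms(2) by (auto simp: words_def)
    have "a \<in> W [r] ` K" using r V0_K[OF assms(1)] by (metis W_Cons W_Nil comp_id image_eqI)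
    moreover have "a \<in> W [\<tau>] ` K" using assms(3) by simp
    ultimately have "a \<in> W [\<tau>] ` V0" using nest[OF _ w] False by blast
    then show ?thesis by auto
  qed
qed

lemma rho1_ex: "\<exists>\<rho>1>0. \<forall>a\<in>V0. \<forall>r\<in>{1..N}. \<forall>z\<in>psi r ` K. dist a z < \<rho>1 \<longrightarrow> a \<in> psi r ` K"
proof -
  have "\<exists>d>(0::real). \<forall>i\<in>V0 \<times> {1..N}. (\<lambda>(a,r) d. \<forall>z\<in>psi r ` K. dist a z < d \<longrightarrow> a \<in> psi r ` K) i d"
  proof (rule finite_min_helper)
    show "finite (V0 \<times> {1..N})" using finV0 by simp
    show "\<forall>i\<in>V0 \<times> {1..N}. \<exists>d>0. (\<lambda>(a,r) d. \<forall>z\<in>psi r ` K. dist a z < d \<longrightarrow> a \<in> psi r ` K) i d"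
    proof
      fix i assume "i \<in> V0 \<times> {1..N}"
      obtain a r where i: "i = (a, r)" by force
      have cl: "closed (psi r ` K)"
        using compK by (intro compact_imp_closed compact_continuous_image)
           (auto simp: Psi_def intro!: continuous_intros)
      show "\<exists>d>0. (\<lambda>(a,r) d. \<forall>z\<in>psi r ` K. dist a z < d \<longrightarrow> a \<in> psi r ` K) i d"
      proof (cases "a \<in> psi r ` K")
        case True then show ?thesis unfolding i by (intro exI[of _ 1]) auto
      next
        case False
        then obtain d where "d > 0" "\<forall>x\<in>psi r ` K. d \<le> dist a x"
          using separate_point_closed[OF \<open>closed (psi r ` K)\<close>] by blast
        then show ?thesis unfolding i by (intro exI[of _ d]) force
      qed
    qed
  qed (auto, meson order_less_le_trans)
  then show ?thesis by auto
qed

lemma psi_eq_shift: "psi \<tau> p = psi \<tau>' s + e \<longleftrightarrow> p = s + L *\<^sub>R (\<nu> \<tau>' + e - \<nu> \<tau>)"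
proof -
  have "psi \<tau> p = psi \<tau>' s + e \<longleftrightarrow> (1/L) *\<^sub>R p = (1/L) *\<^sub>R s + (\<nu> \<tau>' + e - \<nu> \<tau>)"
    by (auto simp: psi_apply algebra_simps)
  also have "\<dots> \<longleftrightarrow> p = s + L *\<^sub>R (\<nu> \<tau>' + e - \<nu> \<tau>)"
  proof
    assume h: "(1/L) *\<^sub>R p = (1/L) *\<^sub>R s + (\<nu> \<tau>' + e - \<nu> \<tau>)"
    have "p = L *\<^sub>R ((1/L) *\<^sub>R p)" using Lpos by simp
    also have "\<dots> = s + L *\<^sub>R (\<nu> \<tau>' + e - \<nu> \<tau>)" unfolding h using Lpos
      by (simp add: scaleR_add_right)
    finally show "p = s + L *\<^sub>R (\<nu> \<tau>' + e - \<nu> \<tau>)" .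
  next
    assume "p = s + L *\<^sub>R (\<nu> \<tau>' + e - \<nu> \<tau>)"
    then show "(1/L) *\<^sub>R p = (1/L) *\<^sub>R s + (\<nu> \<tau>' + e - \<nu> \<tau>)" using Lpos
      by (simp add: scaleR_add_right)
  qed
  finally show ?thesis .
qed

definition NEST :: "real ^ 2 \<Rightarrow> bool" where
  "NEST e \<longleftrightarrow> (\<forall>k. \<forall>t\<in>words N k. \<forall>t'\<in>words N k.
     W t ` K \<inter> (+) e ` W t' ` K \<subseteq> W t ` V0 \<inter> (+) e ` W t' ` V0)"

lemma NEST_0:
  assumes "NEST e" "q \<in> K" "q \<in> (+) e ` K" shows "q \<in> V0 \<and> q - e \<in> V0"
proof -
  have "[] \<in> words N 0" by (simp add: words_0)
  then have "W [] ` K \<inter> (+) e ` W [] ` K \<subseteq> W [] ` V0 \<inter> (+) e ` W [] ` V0"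
    using assms(1) unfolding NEST_def by blast
  then have "K \<inter> (+) e ` K \<subseteq> V0 \<inter> (+) e ` V0" by simp
  then have "q \<in> V0 \<inter> (+) e ` V0" using assms(2,3) by blast
  then show ?thesis by auto
qed

lemma NEST_step:
  assumes "\<tau> \<in> {1..N}" "\<tau>' \<in> {1..N}"
    and H: "\<And>k t t' p. t \<in> words N k \<Longrightarrow> t' \<in> words N k \<Longrightarrow> p \<in> W (\<tau>#t) ` K \<Longrightarrow> p \<in> (+) e ` W (\<tau>'#t') ` K
        \<Longrightarrow> p \<in> W (\<tau>#t) ` V0 \<and> p \<in> (+) e ` W (\<tau>'#t') ` V0"
  shows "NEST (L *\<^sub>R (\<nu> \<tau>' + e - \<nu> \<tau>))"
  unfolding NEST_def
proof (intro allI ballI subsetI)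
  fix k t t' p
  let ?e = "L *\<^sub>R (\<nu> \<tau>' + e - \<nu> \<tau>)"
  assume t: "t \<in> words N k" "t' \<in> words N k" and p: "p \<in> W t ` K \<inter> (+) ?e ` W t' ` K"
  obtain s where s: "s \<in> W t' ` K" "p = ?e + s" using p by auto
  have "psi \<tau> p = psi \<tau>' s + e" using s(2) psi_eq_shift by (simp add: add.commute)
  then have "psi \<tau> p \<in> (+) e ` W (\<tau>'#t') ` K" using s(1) by (auto simp: add.commute)
  moreover have "psi \<tau> p \<in> W (\<tau>#t) ` K" using p by auto
  ultimately have *: "psi \<tau> p \<in> W (\<tau>#t) ` V0" "psi \<tau> p \<in> (+) e ` W (\<tau>'#t') ` V0"
    using H[OF t] by blast+
  from *(1) have "p \<in> W t ` V0" by (auto simp: psi_inj)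
  moreover from *(2) obtain v where v: "v \<in> V0" "psi \<tau> p = e + psi \<tau>' (W t' v)" by auto
  then have "p = W t' v + ?e" using psi_eq_shift by (simp add: add.commute)
  then have "p \<in> (+) ?e ` W t' ` V0" using v(1) by (auto simp: add.commute)
  ultimately show "p \<in> W t ` V0 \<inter> (+) ?e ` W t' ` V0" by blast
qed

lemma NEST_base:
  assumes "i \<in> {1..N}" "j \<in> {1..N}" "i \<noteq> j"
  shows "NEST (L *\<^sub>R (\<nu> j - \<nu> i))"
proof -
  have "NEST (L *\<^sub>R (\<nu> j + 0 - \<nu> i))"
  proof (rule NEST_step[OF assms(1,2)])
    fix k t t' p
    assume t: "t \<in> words N k" "t' \<in> words N k" and p: "p \<in> W (i#t) ` K" "p \<in> (+) 0 ` W (j#t') ` K"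
    have w: "i#t \<in> words N (Suc k)" "j#t' \<in> words N (Suc k)" using t assms by (auto simp: words_Suc)
    have "p \<in> W (i#t) ` K \<inter> W (j#t') ` K" using p by auto
    then show "p \<in> W (i#t) ` V0 \<and> p \<in> (+) 0 ` W (j#t') ` V0"
      using nest[OF _ w] assms(3) by auto
  qed
  then show ?thesis by simp
qed

lemma NEST_closure:
  assumes "NEST e" "\<tau> \<in> {1..N}" "\<tau>' \<in> {1..N}"
  shows "NEST (L *\<^sub>R (\<nu> \<tau>' + e - \<nu> \<tau>))"
proof (rule NEST_step[OF assms(2,3)])
  fix k t t' p
  assume t: "t \<in> words N k" "t' \<in> words N k" and p: "p \<in> W (\<tau>#t) ` K" "p \<in> (+) e ` W (\<tau>'#t') ` K"
  have w: "\<tau>#t \<in> words N (Suc k)" "\<tau>'#t' \<in> words N (Suc k)" using t assms by (auto simp: words_Suc)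
  then show "p \<in> W (\<tau>#t) ` V0 \<and> p \<in> (+) e ` W (\<tau>'#t') ` V0"
    using assms(1) p unfolding NEST_def by blast
qed

end

context snf begin

definition FF :: "(real ^ 2) set" where
  "FF = (\<lambda>(i,j). L *\<^sub>R (\<nu> j - \<nu> i)) ` ({1..N} \<times> {1..N}) \<union> (\<lambda>(a,b). a - b) ` (V0 \<times> V0)"

lemma finite_FF: "finite FF" unfolding FF_def using finV0 by auto

definition Kr :: "real \<Rightarrow> real ^ 2 \<Rightarrow> (real ^ 2) set" where
  "Kr \<rho> e = K \<inter> (\<Inter>q\<in>K \<inter> (+) e ` K. - ball q \<rho>)"

lemma eta_ex:
  assumes "\<rho> > 0"
  shows "\<exists>\<eta>>0. \<forall>e\<in>FF. \<forall>x\<in>Kr \<rho> e. \<forall>y\<in>(+) e ` K. \<eta> \<le> dist x y"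
proof (rule finite_min_helper[OF finite_FF])
  show "\<forall>e\<in>FF. \<exists>d>0. \<forall>x\<in>Kr \<rho> e. \<forall>y\<in>(+) e ` K. d \<le> dist x y"
  proof
    fix e assume "e \<in> FF"
    have c1: "compact (Kr \<rho> e)" unfolding Kr_def
      by (intro compact_Int_closed compK closed_INT ballI closed_Compl open_ball)
    have c2: "closed ((+) e ` K)" using compK by (intro compact_imp_closed compact_translation)
    have c3: "Kr \<rho> e \<inter> (+) e ` K = {}"
    proof (rule ccontr)
      assume "Kr \<rho> e \<inter> (+) e ` K \<noteq> {}"
      then obtain x where x: "x \<in> Kr \<rho> e" "x \<in> (+) e ` K" by blast
      then have "x \<in> K" unfolding Kr_def by blast
      then have "x \<in> - ball x \<rho>" using x unfolding Kr_def by blast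
      then show False using assms by simp
    qed
    show "\<exists>d>0. \<forall>x\<in>Kr \<rho> e. \<forall>y\<in>(+) e ` K. d \<le> dist x y"
      using separate_compact_closed[OF c1 c2 c3] by blast
  qed
qed fastforce

lemma Q:
  assumes R1: "\<forall>a\<in>V0. \<forall>r\<in>{1..N}. \<forall>z\<in>psi r ` K. dist a z < \<rho>1 \<longrightarrow> a \<in> psi r ` K"
    and ET: "\<forall>e\<in>FF. \<forall>x\<in>Kr (\<rho>1/2) e. \<forall>y\<in>(+) e ` K. \<eta> \<le> dist x y"
    and c: "0 < c" "c \<le> \<rho>1/2" "c \<le> \<eta>"
  shows "e \<in> FF \<Longrightarrow> NEST e \<Longrightarrow> t \<in> words N k \<Longrightarrow> t' \<in> words N k \<Longrightarrow>
    W t ` K \<inter> (+) e ` W t' ` K = {} \<Longrightarrow> x \<in> W t ` K \<Longrightarrow> y \<in> (+) e ` W t' ` K \<Longrightarrow>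
    c * (1/L)^k \<le> dist x y"
proof (induction k arbitrary: e t t' x y)
  case 0
  then have t: "t = []" "t' = []" by (auto simp: words_0)
  have "x \<in> Kr (\<rho>1/2) e"
    using 0 unfolding t Kr_def by auto
  then have "\<eta> \<le> dist x y" using ET 0 t by auto
  then show ?case using c by simp
next
  case (Suc k)
  have pk: "(1/L)^Suc k \<le> 1" using L_gt1 by (intro power_le_one) auto
  obtain \<tau> t2 where tt: "t = \<tau> # t2" "\<tau> \<in> {1..N}" "t2 \<in> words N k" using Suc.prems(3) words_Suc by blast
  obtain \<tau>' t2' where tt': "t' = \<tau>' # t2'" "\<tau>' \<in> {1..N}" "t2' \<in> words N k" using Suc.prems(4) words_Suc by blast
  have xK: "x \<in> K" using Suc.prems(3,6) words_sub by blast
  have cpk: "c * (1/L)^Suc k \<le> c * 1" by (rule mult_left_mono[OF pk]) (use c in simp)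
  show ?case
  proof (cases "x \<in> Kr (\<rho>1/2) e")
    case True
    then have "\<eta> \<le> dist x y" using ET Suc.prems words_sub by blast
    moreover note cpk
    ultimately show ?thesis using c by linarith
  next
    case False
    then obtain q where q: "q \<in> K" "q \<in> (+) e ` K" "dist q x < \<rho>1/2"
      using xK unfolding Kr_def by auto
    show ?thesis
    proof (rule ccontr)
      assume "\<not> c * (1/L)^Suc k \<le> dist x y"
      then have dxy: "dist x y < c * (1/L)^Suc k" by simp
      have qV: "q \<in> V0" "q - e \<in> V0" using NEST_0[OF Suc.prems(2) q(1,2)] by auto
      obtain x0 where x0: "x0 \<in> K" "x = psi \<tau> (W t2 x0)" using Suc.prems(6) tt by auto
      obtain y0 where y0: "y0 \<in> K" "y = e + psi \<tau>' (W t2' y0)" using Suc.prems(7) tt' by auto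
      have x1K: "W t2 x0 \<in> K" using x0 tt words_sub by blast
      have "dist q x < \<rho>1" using q(3) zero_le_dist[of q x] by linarith
      moreover have "x \<in> psi \<tau> ` K" using x1K x0(2) by blast
      ultimately have q1: "q \<in> psi \<tau> ` K" using R1 qV(1) tt(2) by blast
      have "dist q y \<le> dist q x + dist x y" by (rule dist_triangle)
      also have "\<dots> < \<rho>1" using q(3) dxy c cpk by linarith
      finally have "dist (q - e) (psi \<tau>' (W t2' y0)) < \<rho>1" using y0(2) by (simp add: dist_norm diff_diff_eq)
      moreover have "W t2' y0 \<in> K" using y0 tt' words_sub by blast
      then have "psi \<tau>' (W t2' y0) \<in> psi \<tau>' ` K" by blast
      ultimately have q2: "q - e \<in> psi \<tau>' ` K" using R1 qV(2) tt'(2) by blast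
      obtain a' where a': "a' \<in> V0" "q = psi \<tau> a'" using V1[OF qV(1) tt(2) q1] by blast
      obtain b' where b': "b' \<in> V0" "q - e = psi \<tau>' b'" using V1[OF qV(2) tt'(2) q2] by blast
      define e' where "e' = L *\<^sub>R (\<nu> \<tau>' + e - \<nu> \<tau>)"
      have "psi \<tau> a' = psi \<tau>' b' + e" using a' b' by (metis diff_add_cancel)
      then have "a' = b' + e'" unfolding e'_def using psi_eq_shift by blast
      then have "e' = a' - b'" by simp
      then have e'F: "e' \<in> FF" unfolding FF_def using a'(1) b'(1) by auto
      have e'N: "NEST e'" unfolding e'_def by (rule NEST_closure[OF Suc.prems(2) tt(2) tt'(2)])
      define x1 where "x1 = W t2 x0"
      define y1 where "y1 = W t2' y0 + e'"
      have xx: "x = psi \<tau> x1" unfolding x1_def using x0 by simp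
      have "psi \<tau> y1 = psi \<tau>' (W t2' y0) + e" unfolding psi_eq_shift y1_def e'_def by simp
      then have yy: "y = psi \<tau> y1" using y0(2) by (simp add: add.commute)
      have x1m: "x1 \<in> W t2 ` K" unfolding x1_def using x0 by simp
      have y1m: "y1 \<in> (+) e' ` W t2' ` K" unfolding y1_def using y0 by (auto simp: add.commute)
      have disj: "W t2 ` K \<inter> (+) e' ` W t2' ` K = {}"
      proof (rule ccontr)
        assume "W t2 ` K \<inter> (+) e' ` W t2' ` K \<noteq> {}"
        then obtain p where p: "p \<in> W t2 ` K" "p \<in> (+) e' ` W t2' ` K" by blast
        obtain s where s: "s \<in> W t2' ` K" "p = e' + s" using p(2) by auto
        have "psi \<tau> p \<in> W t ` K" using p(1) tt by auto
        moreover have "psi \<tau> p = psi \<tau>' s + e" using s(2) psi_eq_shift unfolding e'_def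
          by (simp add: add.commute)
        then have "psi \<tau> p \<in> (+) e ` W t' ` K" using s(1) tt' by (auto simp: add.commute)
        ultimately show False using Suc.prems(5) by blast
      qed
      have "c * (1/L)^k \<le> dist x1 y1"
        using Suc.IH[OF e'F e'N tt(3) tt'(3) disj x1m y1m] .
      then have "(1/L) * (c * (1/L)^k) \<le> (1/L) * dist x1 y1" using Lpos
        by (intro mult_left_mono) auto
      then have "c * (1/L)^Suc k \<le> dist x y" unfolding xx yy psi_dist by (simp add: algebra_simps)
      then show False using dxy by simp
    qed
  qed
qed

end

context snf begin

lemma key_ex: "\<exists>c>0. \<forall>n w w'. w \<in> words N n \<longrightarrow> w' \<in> words N n \<longrightarrow> W w ` K \<inter> W w' ` K = {} \<longrightarrow>
   (\<forall>x\<in>W w ` K. \<forall>y\<in>W w' ` K. c * (1/L)^n \<le> dist x y)"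
proof -
  obtain \<rho>1 where r1: "\<rho>1 > 0" "\<forall>a\<in>V0. \<forall>r\<in>{1..N}. \<forall>z\<in>psi r ` K. dist a z < \<rho>1 \<longrightarrow> a \<in> psi r ` K"
    using rho1_ex by blast
  obtain \<eta> where et: "\<eta> > 0" "\<forall>e\<in>FF. \<forall>x\<in>Kr (\<rho>1/2) e. \<forall>y\<in>(+) e ` K. \<eta> \<le> dist x y"
    using eta_ex[of "\<rho>1/2"] r1(1) by auto
  define c where "c = min (\<rho>1/2) \<eta>"
  have c: "0 < c" "c \<le> \<rho>1/2" "c \<le> \<eta>" unfolding c_def using r1 et by auto
  note QQ = Q[OF r1(2) et(2) c]
  have "w \<in> words N n \<Longrightarrow> w' \<in> words N n \<Longrightarrow> W w ` K \<inter> W w' ` K = {} \<Longrightarrow>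
     x \<in> W w ` K \<Longrightarrow> y \<in> W w' ` K \<Longrightarrow> c * (1/L)^n \<le> dist x y" for n w w' x y
  proof (induction n arbitrary: w w' x y)
    case 0
    then show ?case using Kne by (auto simp: words_0)
  next
    case (Suc n)
    obtain a w1 where ww: "w = a # w1" "a \<in> {1..N}" "w1 \<in> words N n" using Suc.prems(1) words_Suc by blast
    obtain b w1' where ww': "w' = b # w1'" "b \<in> {1..N}" "w1' \<in> words N n" using Suc.prems(2) words_Suc by blast
    obtain x1 where x1: "x1 \<in> W w1 ` K" "x = psi a x1" using Suc.prems(4) ww by auto
    obtain s where s: "s \<in> W w1' ` K" "y = psi b s" using Suc.prems(5) ww' by auto
    show ?case
    proof (cases "a = b")
      case True
      have disj: "W w1 ` K \<inter> W w1' ` K = {}" using Suc.prems(3) ww ww' True by auto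
      have "c * (1/L)^n \<le> dist x1 s" using Suc.IH[OF ww(3) ww'(3) disj x1(1) s(1)] .
      then have "(1/L) * (c * (1/L)^n) \<le> (1/L) * dist x1 s" using Lpos
        by (intro mult_left_mono) auto
      then show ?thesis unfolding x1(2) s(2) True psi_dist by (simp add: algebra_simps)
    next
      case False
      define e where "e = L *\<^sub>R (\<nu> b - \<nu> a)"
      have eF: "e \<in> FF" unfolding FF_def e_def using ww ww' by auto
      have eN: "NEST e" unfolding e_def using NEST_base[OF ww(2) ww'(2) False] .
      define y1 where "y1 = s + e"
      have "psi a y1 = psi b s + 0" unfolding psi_eq_shift y1_def e_def by simp
      then have yy: "y = psi a y1" using s by simp
      have y1m: "y1 \<in> (+) e ` W w1' ` K" unfolding y1_def using s by (auto simp: add.commute)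
      have disj: "W w1 ` K \<inter> (+) e ` W w1' ` K = {}"
      proof (rule ccontr)
        assume "W w1 ` K \<inter> (+) e ` W w1' ` K \<noteq> {}"
        then obtain p where p: "p \<in> W w1 ` K" "p \<in> (+) e ` W w1' ` K" by blast
        obtain s' where s': "s' \<in> W w1' ` K" "p = e + s'" using p(2) by auto
        have "psi a p \<in> W w ` K" using p(1) ww by auto
        moreover have "psi a p = psi b s' + 0" unfolding psi_eq_shift s'(2) e_def by (simp add: add.commute)
        then have "psi a p \<in> W w' ` K" using s'(1) ww' by auto
        ultimately show False using Suc.prems(3) by blast
      qed
      have "c * (1/L)^n \<le> dist x1 y1" using QQ[OF eF eN ww(3) ww'(3) disj x1(1) y1m] .
      then have "(1/L) * (c * (1/L)^n) \<le> (1/L) * dist x1 y1" using Lpos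
        by (intro mult_left_mono) auto
      then show ?thesis unfolding x1(2) yy psi_dist by (simp add: algebra_simps)
    qed
  qed
  then show ?thesis using c(1) by blast
qed

abbreviation "cell \<equiv> (\<lambda>u. W u ` K)"

lemma W_append_img: "W (v @ u) ` K = W v ` W u ` K"
  by (simp add: W_append image_comp)

lemma chain_prefix:
  assumes "gchain cell (words N n) x y ws" "v \<in> words N m"
  shows "gchain cell (words N (m + n)) (W v x) (W v y) (map ((@) v) ws)"
proof (rule gchain_map[OF assms(1)])
  fix u assume "u \<in> words N n"
  then show "v @ u \<in> words N (m + n) \<and> W (v @ u) ` K = W v ` W u ` K"
    using assms(2) by (auto simp: words_def W_append_img)
qed

lemma chain_single: "x \<in> K \<Longrightarrow> y \<in> K \<Longrightarrow> gchain cell (words N 0) x y [[]]"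
  unfolding gchain_def by (auto simp: words_0)

lemma chain_exists: "x \<in> K \<Longrightarrow> y \<in> K \<Longrightarrow> \<exists>ws. gchain cell (words N n) x y ws"
proof (induction n arbitrary: x y)
  case 0 then show ?case using chain_single by blast
next
  case (Suc n)
  have within: "\<exists>ws. gchain cell (words N (Suc n)) p q ws" if ha: "a \<in> {1..N}" and hp: "p \<in> psi a ` K" and hq: "q \<in> psi a ` K" for a p q
  proof -
    obtain p' where p': "p' \<in> K" "p = psi a p'" using hp by blast
    obtain q' where q': "q' \<in> K" "q = psi a q'" using hq by blast
    note pq = p'(1) q'(1) p'(2) q'(2)
    obtain ws where "gchain cell (words N n) p' q' ws" using Suc.IH[OF pq(1,2)] by blast
    moreover have "[a] \<in> words N 1" using ha by (auto simp: words_def)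
    ultimately have "gchain cell (words N (1 + n)) (W [a] p') (W [a] q') (map ((@) [a]) ws)"
      by (rule chain_prefix)
    then show ?thesis using pq by auto
  qed
  obtain a where a: "a \<in> {1..N}" "x \<in> psi a ` K" using Suc.prems(1) Kself by blast
  obtain b where b: "b \<in> {1..N}" "y \<in> psi b ` K" using Suc.prems(2) Kself by blast
  obtain m cc where cc: "cc 0 = a" "cc m = b" "\<forall>l\<le>m. cc l \<in> {1..N}"
    "\<forall>l<m. psi (cc l) ` K \<inter> psi (cc (Suc l)) ` K \<noteq> {}"
    using conn[OF a(1) b(1)] by blast
  have "\<forall>z \<in> psi (cc j) ` K. \<exists>ws. gchain cell (words N (Suc n)) x z ws" if "j \<le> m" for j
    using that
  proof (induction j)
    case 0 then show ?case using within a cc(1) by auto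
  next
    case (Suc j)
    show ?case
    proof
      fix z assume z: "z \<in> psi (cc (Suc j)) ` K"
      have "j < m" using Suc.prems by simp
      then have "psi (cc j) ` K \<inter> psi (cc (Suc j)) ` K \<noteq> {}" using cc(4) by blast
      then obtain p where p: "p \<in> psi (cc j) ` K" "p \<in> psi (cc (Suc j)) ` K" by blast
      obtain ws1 where ws1: "gchain cell (words N (Suc n)) x p ws1" using Suc.IH Suc.prems p(1) by auto
      obtain ws2 where ws2: "gchain cell (words N (Suc n)) p z ws2"
        using within[OF _ p(2) z] cc(3) Suc.prems by auto
      show "\<exists>ws. gchain cell (words N (Suc n)) x z ws"
        using gchain_append[OF ws1 ws2] by blast
    qed
  qed
  then show ?case using b cc(2) by blast
qed

lemma card_words: "card (words N n) = N ^ n"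
  unfolding words_def using card_lists_length_eq[of "{1..N}" n]
  by (simp add: conj_commute)

lemma finite_words: "finite (words N n)"
  unfolding words_def using finite_lists_length_eq[of "{1..N}" n]
  by (simp add: conj_commute)

lemma chain_short: "x \<in> K \<Longrightarrow> y \<in> K \<Longrightarrow> \<exists>ws. gchain cell (words N n) x y ws \<and> length ws \<le> N ^ n"
  using chain_exists gchain_short[OF finite_words] card_words by metis

end

context snf begin

lemma W0_sum: "W u 0 = (\<Sum>r<length u. (1/L)^r *\<^sub>R \<nu> (u!r))"
proof (induction u)
  case Nil then show ?case by simp
next
  case (Cons a u)
  have "W (a#u) 0 = (1/L) *\<^sub>R W u 0 + \<nu> a" by (simp add: psi_apply)
  also have "\<dots> = (\<Sum>r<length u. (1/L)^(Suc r) *\<^sub>R \<nu> (u!r)) + \<nu> a"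
    unfolding Cons by (simp add: scaleR_sum_right)
  also have "\<dots> = (\<Sum>r<length (a#u). (1/L)^r *\<^sub>R \<nu> ((a#u)!r))"
    unfolding length_Cons sum.lessThan_Suc_shift by simp
  finally show ?case .
qed

lemma W_affine: "W u p = (1/L)^length u *\<^sub>R p + W u 0"
  by (induction u) (auto simp: psi_apply algebra_simps)

lemma cell_complex:
  fixes J M :: int
  assumes "J \<ge> M + 1" "u \<in> words N (nat (J - M))"
  shows "(\<lambda>p. (L powr J) *\<^sub>R p) ` W u ` K \<in> complexes L N \<nu> K M"
proof -
  define n where "n = nat (J - M)"
  have lu: "length u = n" and su: "set u \<subseteq> {1..N}" using assms(2) unfolding n_def words_def by auto
  have nJ: "real n = real_of_int J - real_of_int M" unfolding n_def using assms(1) by simp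
  define i where "i = (\<lambda>j::int. u ! nat (J - j))"
  define S where "S = (\<Sum>j\<in>{M+1..J}. (L powr real_of_int j) *\<^sub>R \<nu> (i j))"
  have pw: "L powr real_of_int J * (1/L)^r = L powr (real_of_int J - real r)" for r :: nat
    using Lpos by (simp add: powr_diff powr_realpow divide_inverse power_one_over power_inverse)
  have sumeq: "L powr real_of_int J *\<^sub>R W u 0 = S"
  proof -
    have "L powr real_of_int J *\<^sub>R W u 0 = (\<Sum>r<n. (L powr (real_of_int J - real r)) *\<^sub>R \<nu> (u!r))"
      unfolding W0_sum lu scaleR_sum_right using pw by (simp add: scaleR_scaleR)
    also have "\<dots> = S" unfolding S_def i_def
    proof (rule sum.reindex_bij_witness[where i = "\<lambda>b. nat (J - b)" and j = "\<lambda>r. J - int r"])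
      fix r assume "r \<in> {..<n}"
      then show "nat (J - (J - int r)) = r" "J - int r \<in> {M + 1..J}" using n_def by auto
      show "L powr real_of_int (J - int r) *\<^sub>R \<nu> (u ! nat (J - (J - int r))) =
            L powr (real_of_int J - real r) *\<^sub>R \<nu> (u ! r)" by simp
    next
      fix b assume "b \<in> {M + 1..J}"
      then show "J - int (nat (J - b)) = b" "nat (J - b) \<in> {..<n}" using n_def by auto
    qed
    finally show ?thesis .
  qed
  have pM: "L powr real_of_int J * (1/L)^n = L powr real_of_int M" using pw[of n] nJ by simp
  have img: "(\<lambda>p. (L powr J) *\<^sub>R p) ` W u ` K = (\<lambda>x. x + S) ` Kscaled L K M"
    unfolding Kscaled_def image_image
  proof (rule image_cong[OF refl])
    fix p assume "p \<in> K"
    have "L powr J *\<^sub>R W u p = (L powr J * (1/L)^n) *\<^sub>R p + L powr J *\<^sub>R W u 0"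
      by (subst W_affine) (simp add: lu scaleR_add_right)
    also have "\<dots> = L powr real_of_int M *\<^sub>R p + S" using pM sumeq by simp
    finally show "L powr J *\<^sub>R W u p = L powr real_of_int M *\<^sub>R p + S" .
  qed
  have iN: "\<forall>j\<in>{M+1..J}. i j \<in> {1..N}"
  proof
    fix j assume "j \<in> {M+1..J}"
    then have "nat (J - j) < length u" using lu n_def by auto
    then show "i j \<in> {1..N}" unfolding i_def using su nth_mem by blast
  qed
  show ?thesis unfolding img complexes_def S_def using assms(1) iN by blast
qed

lemma complex_diam: "\<exists>B>0. \<forall>M. \<forall>D\<in>complexes L N \<nu> K M. \<forall>a\<in>D. \<forall>b\<in>D. dist a b \<le> L powr real_of_int M * B"
proof -
  obtain b where b: "b > 0" "\<forall>x\<in>K. norm x \<le> b" using compK compact_imp_bounded bounded_pos by metis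
  have "\<forall>M. \<forall>D\<in>complexes L N \<nu> K M. \<forall>p\<in>D. \<forall>q\<in>D. dist p q \<le> L powr real_of_int M * (2*b)"
  proof (intro allI ballI)
    fix M D p q assume D: "D \<in> complexes L N \<nu> K M" and pq: "p \<in> D" "q \<in> D"
    obtain S where DS: "D = (\<lambda>x. x + S) ` Kscaled L K M" using D unfolding complexes_def by blast
    obtain p' q' where p'q': "p' \<in> K" "q' \<in> K" "p = L powr real_of_int M *\<^sub>R p' + S" "q = L powr real_of_int M *\<^sub>R q' + S"
      using pq unfolding DS Kscaled_def by auto
    have "dist p q = norm (L powr real_of_int M *\<^sub>R (p' - q'))"
      unfolding p'q' dist_norm by (simp add: algebra_simps)
    also have "\<dots> = L powr real_of_int M * norm (p' - q')" by simp
    also have "\<dots> \<le> L powr real_of_int M * (2*b)"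
    proof (rule mult_left_mono)
      have "norm p' \<le> b" "norm q' \<le> b" using b(2) p'q'(1,2) by auto
      then show "norm (p' - q') \<le> 2*b" using norm_triangle_ineq4[of p' q'] by linarith
    qed simp
    finally show "dist p q \<le> L powr real_of_int M * (2*b)" .
  qed
  then show ?thesis using b by (intro exI[of _ "2*b"]) auto
qed

lemma Kinf_scale:
  assumes "x \<in> Kinf L K"
  shows "\<exists>M1::nat. \<forall>J::int. J \<ge> int M1 \<longrightarrow> (L powr real_of_int (-J)) *\<^sub>R x \<in> K"
proof -
  obtain M1 :: nat where "x \<in> Kscaled L K (int M1)" using assms unfolding Kinf_def by blast
  then obtain p where p: "p \<in> K" "x = (L powr real M1) *\<^sub>R p" unfolding Kscaled_def by auto
  have "(L powr real_of_int (-J)) *\<^sub>R x \<in> K" if "J \<ge> int M1" for J :: int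
  proof -
    define k where "k = nat (J - int M1)"
    have "L powr real_of_int (-J) * L powr real M1 = L powr (- real k)"
      unfolding k_def using that by (simp add: powr_add[symmetric])
    also have "\<dots> = (1/L)^k" using Lpos by (simp add: powr_minus powr_realpow power_one_over inverse_eq_divide)
    finally have "(L powr real_of_int (-J)) *\<^sub>R x = (1/L)^k *\<^sub>R p" unfolding p(2) by simp
    then show ?thesis using psi_K_pow[OF p(1)] by simp
  qed
  then show ?thesis by blast
qed

end

context snf begin

lemma main_chain:
  fixes M m :: int
  assumes c: "c > 0"
    and key: "\<forall>n w w'. w \<in> words N n \<longrightarrow> w' \<in> words N n \<longrightarrow> W w ` K \<inter> W w' ` K = {} \<longrightarrow>
         (\<forall>x\<in>W w ` K. \<forall>y\<in>W w' ` K. c * (1/L)^n \<le> dist x y)"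
    and mM: "m \<ge> M" and xy: "x \<in> Kinf L K" "y \<in> Kinf L K" and d: "dist x y < c * L powr real_of_int m"
  shows "\<exists>Ds. gchain id (complexes L N \<nu> K M) x y Ds \<and> length Ds \<le> 2 * N ^ nat (m - M)"
proof -
  obtain M1 :: nat where M1: "\<forall>J::int. J \<ge> int M1 \<longrightarrow> (L powr real_of_int (-J)) *\<^sub>R x \<in> K"
    using Kinf_scale[OF xy(1)] by blast
  obtain M2 :: nat where M2: "\<forall>J::int. J \<ge> int M2 \<longrightarrow> (L powr real_of_int (-J)) *\<^sub>R y \<in> K"
    using Kinf_scale[OF xy(2)] by blast
  define J where "J = max (m+1) (max (int M1) (int M2))"
  define X where "X = (L powr real_of_int (-J)) *\<^sub>R x"
  define Y where "Y = (L powr real_of_int (-J)) *\<^sub>R y"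
  have XK: "X \<in> K" unfolding X_def using M1 J_def by auto
  have YK: "Y \<in> K" unfolding Y_def using M2 J_def by auto
  define n0 where "n0 = nat (J - m)"
  define k where "k = nat (m - M)"
  have n0k: "n0 + k = nat (J - M)" unfolding n0_def k_def J_def using mM by auto
  have JM: "J \<ge> M + 1" unfolding J_def using mM by auto
  have "dist X Y = L powr real_of_int (-J) * dist x y"
    unfolding X_def Y_def dist_norm by (simp flip: scaleR_diff_right)
  also have "\<dots> < L powr real_of_int (-J) * (c * L powr real_of_int m)"
    using d Lpos by (intro mult_strict_left_mono) auto
  also have "\<dots> = c * (1/L)^n0"
  proof -
    have "L powr real_of_int (-J) * L powr real_of_int m = L powr (- real n0)"
      unfolding n0_def J_def by (simp add: powr_add[symmetric])
    also have "\<dots> = (1/L)^n0" using Lpos by (simp add: powr_minus powr_realpow power_one_over inverse_eq_divide)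
    finally show ?thesis by (simp add: algebra_simps)
  qed
  finally have dXY: "dist X Y < c * (1/L)^n0" .
  obtain w where w: "w \<in> words N n0" "X \<in> W w ` K" using cover[OF XK] by blast
  obtain w' where w': "w' \<in> words N n0" "Y \<in> W w' ` K" using cover[OF YK] by blast
  have "W w ` K \<inter> W w' ` K \<noteq> {}"
    using key w w' dXY by (meson not_le)
  then obtain z where z: "z \<in> W w ` K" "z \<in> W w' ` K" by blast
  obtain X' where X': "X' \<in> K" "X = W w X'" using w(2) by blast
  obtain Y' where Y': "Y' \<in> K" "Y = W w' Y'" using w'(2) by blast
  obtain z1 where z1: "z1 \<in> K" "z = W w z1" using z(1) by blast
  obtain z2 where z2: "z2 \<in> K" "z = W w' z2" using z(2) by blast
  obtain ws1 where ws1: "gchain cell (words N k) X' z1 ws1" "length ws1 \<le> N^k"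
    using chain_short[OF X'(1) z1(1)] by blast
  obtain ws2 where ws2: "gchain cell (words N k) z2 Y' ws2" "length ws2 \<le> N^k"
    using chain_short[OF z2(1) Y'(1)] by blast
  have A: "gchain cell (words N (n0 + k)) X z (map ((@) w) ws1)"
    using chain_prefix[OF ws1(1) w(1)] X'(2) z1(2) by simp
  have B: "gchain cell (words N (n0 + k)) z Y (map ((@) w') ws2)"
    using chain_prefix[OF ws2(1) w'(1)] Y'(2) z2(2) by simp
  define ws where "ws = map ((@) w) ws1 @ map ((@) w') ws2"
  have AB: "gchain cell (words N (nat (J - M))) X Y ws"
    using gchain_append[OF A B] n0k unfolding ws_def by simp
  have lws: "length ws \<le> 2 * N^k" using ws1(2) ws2(2) unfolding ws_def by simp
  define h where "h = (\<lambda>p::real^2. (L powr real_of_int J) *\<^sub>R p)"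
  have "gchain id (complexes L N \<nu> K M) (h X) (h Y) (map (\<lambda>u. h ` W u ` K) ws)"
  proof (rule gchain_map[OF AB])
    fix u assume "u \<in> words N (nat (J - M))"
    then show "h ` W u ` K \<in> complexes L N \<nu> K M \<and> id (h ` W u ` K) = h ` W u ` K"
      using cell_complex[OF JM] unfolding h_def by auto
  qed
  moreover have "h X = x" "h Y = y" unfolding h_def X_def Y_def
    using Lpos by (simp_all add: powr_add[symmetric])
  ultimately show ?thesis using lws unfolding k_def by (intro exI[of _ "map (\<lambda>u. h ` W u ` K) ws"]) auto
qed

end

lemma gchain_complex_chain:
  assumes "gchain id (complexes L N \<nu> K M) x y Ds"
  shows "complex_chain L N \<nu> K M (length Ds) x y"
proof -
  have ne: "Ds \<noteq> []" and sub: "set Ds \<subseteq> complexes L N \<nu> K M" and x: "x \<in> hd Ds" and y: "y \<in> last Ds"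
    and s: "successively (\<lambda>u v. u \<inter> v \<noteq> {}) Ds"
    using assms unfolding gchain_def by auto
  define D where "D = (\<lambda>l. Ds ! (l - 1))"
  have "\<forall>l\<in>{1..length Ds}. D l \<in> complexes L N \<nu> K M"
    unfolding D_def using sub by (auto intro!: subsetD[OF sub] nth_mem)
  moreover have "x \<in> D 1" unfolding D_def using x ne by (simp add: hd_conv_nth)
  moreover have "y \<in> D (length Ds)" unfolding D_def using y ne by (simp add: last_conv_nth)
  moreover have "\<forall>l\<in>{1..<length Ds}. D l \<inter> D (Suc l) \<noteq> {}"
  proof
    fix l assume l: "l \<in> {1..<length Ds}"
    then have "Suc (l - 1) < length Ds" by auto
    then have "Ds ! (l-1) \<inter> Ds ! Suc (l-1) \<noteq> {}" using s unfolding successively_conv_nth by blast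
    then show "D l \<inter> D (Suc l) \<noteq> {}" unfolding D_def using l by auto
  qed
  ultimately show ?thesis unfolding complex_chain_def by blast
qed

lemma dM_le:
  assumes "gchain id (complexes L N \<nu> K M) x y Ds"
  shows "dM L N \<nu> K M x y \<le> length Ds"
proof -
  have ne: "Ds \<noteq> []" using assms unfolding gchain_def by auto
  show ?thesis
  proof (cases "x = y \<or> (\<exists>D\<in>complexes L N \<nu> K M. x \<in> D \<and> y \<in> D)")
    case True then show ?thesis using ne unfolding dM_def by (auto simp: Suc_leI)
  next
    case False
    have "length Ds \<noteq> 1"
    proof
      assume "length Ds = 1"
      then have "hd Ds = last Ds" by (cases Ds) auto
      moreover have "hd Ds \<in> complexes L N \<nu> K M" "x \<in> hd Ds" "y \<in> last Ds"
        using assms ne unfolding gchain_def by auto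
      ultimately show False using False by auto
    qed
    then have "length Ds > 1" using ne by (cases Ds) auto
    then have "(LEAST n. n > 1 \<and> complex_chain L N \<nu> K M n x y) \<le> length Ds"
      using gchain_complex_chain[OF assms] by (intro Least_le) auto
    then show ?thesis using False unfolding dM_def by auto
  qed
qed

lemma dM_chain:
  assumes "gchain id (complexes L N \<nu> K M) x y Ds" "x \<noteq> y"
    "\<not> (\<exists>D\<in>complexes L N \<nu> K M. x \<in> D \<and> y \<in> D)"
  shows "dM L N \<nu> K M x y > 1 \<and> complex_chain L N \<nu> K M (dM L N \<nu> K M x y) x y"
proof -
  have ne: "Ds \<noteq> []" using assms unfolding gchain_def by auto
  have "length Ds \<noteq> 1"
  proof
    assume "length Ds = 1"
    then have "hd Ds = last Ds" by (cases Ds) auto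
    moreover have "hd Ds \<in> complexes L N \<nu> K M" "x \<in> hd Ds" "y \<in> last Ds"
      using assms ne unfolding gchain_def by auto
    ultimately show False using assms(3) by auto
  qed
  then have "length Ds > 1" using ne by (cases Ds) auto
  then have "(\<lambda>n. n > 1 \<and> complex_chain L N \<nu> K M n x y) (LEAST n. n > 1 \<and> complex_chain L N \<nu> K M n x y)"
    using gchain_complex_chain[OF assms(1)] by (intro LeastI) auto
  then show ?thesis using assms(2,3) unfolding dM_def by auto
qed

lemma complex_chain_dist:
  assumes B: "\<forall>D\<in>complexes L N \<nu> K M. \<forall>a\<in>D. \<forall>b\<in>D. dist a b \<le> B"
  shows "complex_chain L N \<nu> K M (Suc n) x y \<Longrightarrow> dist x y \<le> real (Suc n) * B"
proof (induction n arbitrary: y)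
  case 0
  then obtain D where "D 1 \<in> complexes L N \<nu> K M" "x \<in> D 1" "y \<in> D 1"
    unfolding complex_chain_def by auto
  then show ?case using B by auto
next
  case (Suc n)
  then obtain D where D: "\<forall>l\<in>{1..Suc (Suc n)}. D l \<in> complexes L N \<nu> K M" "x \<in> D 1" "y \<in> D (Suc (Suc n))"
      "\<forall>l\<in>{1..<Suc (Suc n)}. D l \<inter> D (Suc l) \<noteq> {}"
    unfolding complex_chain_def by blast
  obtain p where p: "p \<in> D (Suc n)" "p \<in> D (Suc (Suc n))" using D(4) by fastforce
  have "complex_chain L N \<nu> K M (Suc n) x p"
    unfolding complex_chain_def using D p by (intro exI[of _ D]) auto
  then have "dist x p \<le> real (Suc n) * B" using Suc.IH by blast
  moreover have "D (Suc (Suc n)) \<in> complexes L N \<nu> K M" using D(1) by simp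
  then have "dist p y \<le> B" using B D(3) p(2) by blast
  ultimately show ?case using dist_triangle[of x y p] by (simp add: algebra_simps)
qed

context snf begin

lemma powr_N: "(L ^ k) powr (ln (real N) / ln L) = real N ^ k"
proof -
  have lnL: "ln L > 0" using L_gt1 by simp
  have Npos: "real N > 0" using N_ge2 by simp
  have "(L ^ k) powr (ln (real N) / ln L) = exp ((ln (real N) / ln L) * ln (L ^ k))"
    using Lpos by (simp add: powr_def)
  also have "\<dots> = exp (real k * ln (real N))" using lnL Lpos by (simp add: ln_realpow)
  also have "\<dots> = exp (ln (real N ^ k))" using Npos by (simp add: ln_realpow)
  also have "\<dots> = real N ^ k" using Npos by simp
  finally show ?thesis .
qed

lemma final:
  "\<forall>M::int. \<exists>C6>0. \<exists>C7>0. \<forall>x\<in>Kinf L K. \<forall>y\<in>Kinf L K.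
           C6 * norm (x - y) \<le> real (dM L N \<nu> K M x y) \<and>
           real (dM L N \<nu> K M x y) \<le> max 2 (C7 * norm (x - y) powr (ln (real N) / ln L))"
proof
  fix M :: int
  obtain c where c: "c > 0" and key: "\<forall>n w w'. w \<in> words N n \<longrightarrow> w' \<in> words N n \<longrightarrow> W w ` K \<inter> W w' ` K = {} \<longrightarrow>
         (\<forall>x\<in>W w ` K. \<forall>y\<in>W w' ` K. c * (1/L)^n \<le> dist x y)"
    using key_ex by blast
  obtain B where B: "B > 0" "\<forall>M. \<forall>D\<in>complexes L N \<nu> K M. \<forall>a\<in>D. \<forall>b\<in>D. dist a b \<le> L powr real_of_int M * B"
    using complex_diam by blast
  define B' where "B' = L powr real_of_int M * B"
  have B'pos: "B' > 0" unfolding B'_def using B Lpos by simp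
  have B'M: "\<forall>D\<in>complexes L N \<nu> K M. \<forall>a\<in>D. \<forall>b\<in>D. dist a b \<le> B'" using B unfolding B'_def by blast
  define df where "df = ln (real N) / ln L"
  have dfpos: "df > 0" unfolding df_def using L_gt1 N_ge2 by (simp add: divide_pos_pos)
  define cM where "cM = c * L powr real_of_int M"
  have cMpos: "cM > 0" unfolding cM_def using c Lpos by simp
  have pw: "c * L powr real_of_int (M + int n) = cM * L ^ n" for n :: nat
    unfolding cM_def using Lpos by (simp add: powr_add powr_realpow)
  have chain_ex: "\<exists>Ds. gchain id (complexes L N \<nu> K M) x y Ds" if "x \<in> Kinf L K" "y \<in> Kinf L K" for x y
  proof -
    obtain n where n: "dist x y / cM < L ^ n" using real_arch_pow[OF L_gt1] by blast
    then have "dist x y < cM * L ^ n" using cMpos by (simp add: divide_less_eq mult.commute)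
    then have d: "dist x y < c * L powr real_of_int (M + int n)" using pw by simp
    have "M \<le> M + int n" by simp
    from main_chain[OF c key this that d] show ?thesis by blast
  qed
  define C6 where "C6 = 1 / B'"
  define C7 where "C7 = 2 * real N / cM powr df"
  have C6pos: "C6 > 0" unfolding C6_def using B'pos by simp
  have C7pos: "C7 > 0" unfolding C7_def using cMpos N_ge2 by simp
  have "\<forall>x\<in>Kinf L K. \<forall>y\<in>Kinf L K.
           C6 * norm (x - y) \<le> real (dM L N \<nu> K M x y) \<and>
           real (dM L N \<nu> K M x y) \<le> max 2 (C7 * norm (x - y) powr df)"
  proof (intro ballI conjI)
    fix x y assume xy: "x \<in> Kinf L K" "y \<in> Kinf L K"
    obtain Ds0 where Ds0: "gchain id (complexes L N \<nu> K M) x y Ds0" using chain_ex[OF xy] by blast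
    show "C6 * norm (x - y) \<le> real (dM L N \<nu> K M x y)"
    proof (cases "x = y")
      case True then show ?thesis by simp
    next
      case xne: False
      show ?thesis
      proof (cases "\<exists>D\<in>complexes L N \<nu> K M. x \<in> D \<and> y \<in> D")
        case True
        then have dB: "dist x y \<le> B'" using B'M by blast
        have "dM L N \<nu> K M x y = 1" using True xne unfolding dM_def by simp
        from dB have "C6 * dist x y \<le> C6 * B'" by (rule mult_left_mono) (use C6pos in auto)
        also have "C6 * B' = 1" unfolding C6_def using B'pos by simp
        finally show ?thesis using \<open>dM L N \<nu> K M x y = 1\<close> by (simp add: dist_norm)
      next
        case False
        define n where "n = dM L N \<nu> K M x y - 1"
        have h: "dM L N \<nu> K M x y > 1" "complex_chain L N \<nu> K M (dM L N \<nu> K M x y) x y"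
          using dM_chain[OF Ds0 xne False] by auto
        have n1: "dM L N \<nu> K M x y = Suc n" unfolding n_def using h(1) by simp
        have "dist x y \<le> real (Suc n) * B'" using complex_chain_dist[OF B'M] h(2) unfolding n1 by blast
        then have "C6 * dist x y \<le> C6 * (real (Suc n) * B')" by (rule mult_left_mono) (use C6pos in auto)
        also have "C6 * (real (Suc n) * B') = real (Suc n)" unfolding C6_def using B'pos by simp
        finally show ?thesis unfolding n1 by (simp add: dist_norm)
      qed
    qed
    show "real (dM L N \<nu> K M x y) \<le> max 2 (C7 * norm (x - y) powr df)"
    proof (cases "x = y")
      case True then show ?thesis by (simp add: dM_def)
    next
      case xne: False
      define r where "r = dist x y / cM"
      show ?thesis
      proof (cases "r < 1")
        case True
        then have "dist x y < c * L powr real_of_int M" unfolding r_def cM_def using cMpos cM_def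
          by (simp add: divide_less_eq)
        from main_chain[OF c key order.refl xy this] obtain Ds
          where "gchain id (complexes L N \<nu> K M) x y Ds" "length Ds \<le> 2 * N ^ nat (M - M)" by blast
        then have "dM L N \<nu> K M x y \<le> 2" using dM_le by fastforce
        then show ?thesis by simp
      next
        case False
        have ex: "\<exists>n. r < L ^ n" using real_arch_pow[OF L_gt1] by blast
        define n0 where "n0 = (LEAST n. r < L ^ n)"
        have n0: "r < L ^ n0" unfolding n0_def using LeastI_ex[OF ex] .
        have "n0 \<noteq> 0"
        proof
          assume "n0 = 0" then show False using n0 False by simp
        qed
        then obtain k where k: "n0 = Suc k" using not0_implies_Suc by blast
        have "\<not> r < L ^ k" unfolding n0_def by (rule not_less_Least) (simp add: k n0_def[symmetric])
        then have Lk: "L ^ k \<le> r" by simp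
        have "dist x y < cM * L ^ Suc k" using n0 k cMpos unfolding r_def by (simp add: divide_less_eq mult.commute)
        then have d: "dist x y < c * L powr real_of_int (M + int (Suc k))" using pw[of "Suc k"] by argo
        have "M \<le> M + int (Suc k)" by simp
        from main_chain[OF c key this xy d] obtain Ds where Ds: "gchain id (complexes L N \<nu> K M) x y Ds" "length Ds \<le> 2 * N ^ nat (M + int (Suc k) - M)"
          by blast
        have "nat (M + int (Suc k) - M) = Suc k" by simp
        then have "dM L N \<nu> K M x y \<le> 2 * N ^ Suc k" using dM_le[OF Ds(1)] Ds(2) by (metis le_trans)
        then have "real (dM L N \<nu> K M x y) \<le> real (2 * N ^ Suc k)" by (simp only: of_nat_le_iff)
        also have "real (2 * N ^ Suc k) = 2 * real N * real N ^ k" by simp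
        also have "\<dots> = 2 * real N * (L ^ k) powr df" unfolding df_def powr_N ..
        also have "\<dots> \<le> 2 * real N * r powr df"
          using Lk dfpos Lpos by (intro mult_left_mono powr_mono2) auto
        also have "\<dots> = C7 * norm (x - y) powr df"
          unfolding r_def C7_def using cMpos by (simp add: powr_divide dist_norm)
        finally show ?thesis by simp
      qed
    qed
  qed
  then show "\<exists>C6>0. \<exists>C7>0. \<forall>x\<in>Kinf L K. \<forall>y\<in>Kinf L K.
           C6 * norm (x - y) \<le> real (dM L N \<nu> K M x y) \<and>
           real (dM L N \<nu> K M x y) \<le> max 2 (C7 * norm (x - y) powr (ln (real N) / ln L))"
    using C6pos C7pos unfolding df_def by blast
qed

end

theorem lemmaA3:
  fixes L :: real and N :: nat and \<nu> :: "nat \<Rightarrow> real ^ 2" and K :: "(real ^ 2) set"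
  assumes "simple_nested_fractal L N \<nu> K"
  shows "\<forall>M::int. \<exists>C6>0. \<exists>C7>0. \<forall>x\<in>Kinf L K. \<forall>y\<in>Kinf L K.
           C6 * norm (x - y) \<le> real (dM L N \<nu> K M x y) \<and>
           real (dM L N \<nu> K M x y) \<le> max 2 (C7 * norm (x - y) powr (ln (real N) / ln L))"
  using snf.final[OF snf.intro[OF assms]] .

end
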